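(* Let $q$ be a prime power, $n=2^v$ with $v\ge1$ and $q$ odd. Let $s,t$ be integers with $s$ odd, $qt\equiv t\pmod{2^v}$ and $t\not\equiv0\pmod{2^v}$. Type-I duadic splittings of $\mathbb{Z}_{2^v}$ given by $\rho_{s,t}$ exist if and only if $\nu_2(q^j-s)>\nu_2(t)$ for all integers $j\ge0$.
   Context: $\mu_q:\mathbb{Z}_n\to\mathbb{Z}_n$, $i\mapsto qi\bmod n$; $P\subseteq\mathbb{Z}_n$ is $\mu_q$-invariant if $\mu_q(P)=P$. $\rho_{s,t}:\mathbb{Z}_n\to\mathbb{Z}_n$, $i\mapsto s(i+t)\bmod n$. Type-I duadic splittings of $\mathbb{Z}_n$ given by $\rho_{s,t}$ exist if there is a $\mu_q$-invariant $P$ with $\mathbb{Z}_n=P\cup\rho_{s,t}(P)$ a disjoint union. $\nu_2$ is the $2$-adic valuation, $\nu_2(0)=\infty$. *)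

theory Defs
  imports "HOL-Computational_Algebra.Computational_Algebra" "HOL-Number_Theory.Number_Theory"
    "HOL-Library.Extended_Nat"
begin

text \<open>Z_n is represented by the residues {0..<n} (as integers).\<close>

definition mu_map :: "int \<Rightarrow> int \<Rightarrow> int \<Rightarrow> int" where
  "mu_map n q i = (q * i) mod n"

definition rho_map :: "int \<Rightarrow> int \<Rightarrow> int \<Rightarrow> int \<Rightarrow> int" where
  "rho_map n s t i = (s * (i + t)) mod n"

definition mu_invariant :: "int \<Rightarrow> int \<Rightarrow> int set \<Rightarrow> bool" where
  "mu_invariant n q P \<longleftrightarrow> mu_map n q ` P = P"

definition typeI_duadic_exists :: "int \<Rightarrow> int \<Rightarrow> int \<Rightarrow> int \<Rightarrow> bool" where
  "typeI_duadic_exists n q s t \<longleftrightarrow>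
     (\<exists>P. P \<subseteq> {0..<n} \<and> mu_invariant n q P \<and>
          P \<union> rho_map n s t ` P = {0..<n} \<and> P \<inter> rho_map n s t ` P = {})"

definition nu2 :: "int \<Rightarrow> enat" where
  "nu2 x = (if x = 0 then \<infinity> else enat (multiplicity (2::int) x))"

definition prime_power :: "nat \<Rightarrow> bool" where
  "prime_power q \<longleftrightarrow> (\<exists>p k. prime p \<and> k \<ge> 1 \<and> q = p ^ k)"

end

theory Submission
  imports Defs
begin

lemma nu2_gt_iff:
  fixes x t :: int
  assumes "t \<noteq> 0"
  shows "nu2 x > nu2 t \<longleftrightarrow> (2::int) ^ (multiplicity 2 t + 1) dvd x"
proof (cases "x = 0")
  case True
  then show ?thesis using assms by (simp add: nu2_def)
next
  case False
  have "nu2 x > nu2 t \<longleftrightarrow> multiplicity 2 t + 1 \<le> multiplicity (2::int) x"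
    using assms False by (auto simp: nu2_def)
  also have "\<dots> \<longleftrightarrow> (2::int) ^ (multiplicity 2 t + 1) dvd x"
    using False by (subst power_dvd_iff_le_multiplicity) auto
  finally show ?thesis .
qed

lemma odd_part:
  fixes x :: int
  assumes "x \<noteq> 0"
  obtains w where "x = 2 ^ multiplicity 2 x * w" "odd w"
proof -
  obtain w where w: "x = 2 ^ multiplicity 2 x * w"
    using multiplicity_dvd[of 2 x] by (auto elim: dvdE)
  have "odd w"
  proof
    assume "even w"
    then have "(2::int) ^ Suc (multiplicity 2 x) dvd x"
      by (subst w) (auto elim!: evenE)
    then have "Suc (multiplicity 2 x) \<le> multiplicity 2 x"
      using assms by (subst (asm) power_dvd_iff_le_multiplicity) auto
    then show False by simp
  qed
  then show ?thesis using w that by blast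
qed

lemma mod_range: "(0::int) < n \<Longrightarrow> a mod n \<in> {0..<n}" by simp

lemma inj_mult_mod:
  fixes n c :: int
  assumes "coprime c n" "0 < n"
  shows "inj_on (\<lambda>x. (c * (x + d)) mod n) {0..<n}"
proof
  fix x y assume x: "x \<in> {0..<n}" and y: "y \<in> {0..<n}"
    and e: "(c * (x + d)) mod n = (c * (y + d)) mod n"
  then have "[c * (x + d) = c * (y + d)] (mod n)" by (simp add: cong_def)
  then have "[x + d = y + d] (mod n)" using assms by (simp add: cong_mult_lcancel)
  then have "[x = y] (mod n)" by (simp add: cong_add_rcancel)
  then show "x = y" using x y by (intro cong_less_imp_eq_int) auto
qed

theorem lemma3p4:
  fixes q v :: nat and s t :: int
  assumes "prime_power q" and "odd q" and "v \<ge> 1"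
    and "odd s"
    and "[int q * t = t] (mod 2 ^ v)"
    and "\<not> [t = 0] (mod 2 ^ v)"
  shows "typeI_duadic_exists (2 ^ v) (int q) s t \<longleftrightarrow>
         (\<forall>j::nat. nu2 (int q ^ j - s) > nu2 t)"
proof -
  define n :: int where "n = 2 ^ v"
  define \<tau> where "\<tau> = multiplicity (2::int) t"
  have npos: "n > 0" by (simp add: n_def)
  have t0: "t \<noteq> 0" using assms(6) by (auto simp: cong_def)
  have cq: "coprime (int q) n" using assms(2) by (simp add: n_def)
  have cs: "coprime s n" using assms(4) by (simp add: n_def)
  obtain u where tu: "t = 2 ^ \<tau> * u" "odd u" using odd_part[OF t0] \<tau>_def by metis
  have tauv: "\<tau> < v"
  proof (rule ccontr)
    assume "\<not> \<tau> < v"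
    then have "(2::int) ^ v dvd 2 ^ \<tau>" by (simp add: le_imp_power_dvd)
    then have "(2::int) ^ v dvd t" using tu by simp
    then show False using assms(6) by (simp add: cong_0_iff)
  qed
  have rhs: "(\<forall>j::nat. nu2 (int q ^ j - s) > nu2 t) \<longleftrightarrow>
             (\<forall>j::nat. (2::int) ^ (\<tau> + 1) dvd (int q ^ j - s))"
    using nu2_gt_iff[OF t0] \<tau>_def by simp
  have qt: "[int q ^ j * t = t] (mod n)" for j
  proof (induction j)
    case (Suc j)
    have "[int q ^ Suc j * t = int q * (int q ^ j * t)] (mod n)" by (simp add: mult.assoc)
    also have "[int q * (int q ^ j * t) = int q * t] (mod n)"
      using Suc by (intro cong_mult) auto
    also have "[int q * t = t] (mod n)" using assms(5) by (simp add: n_def)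
    finally show ?case .
  qed simp
  have injrho: "inj_on (\<lambda>x. (s * (x + t)) mod n) {0..<n}"
    using inj_mult_mod[OF cs npos] .
  have injmu: "inj_on (\<lambda>x. (int q * (x + 0)) mod n) {0..<n}"
    using inj_mult_mod[OF cq npos] .
  show ?thesis
    unfolding rhs
  proof
    assume "typeI_duadic_exists (2 ^ v) (int q) s t"
    then obtain P where P: "P \<subseteq> {0..<n}" "mu_invariant n (int q) P"
      "P \<union> rho_map n s t ` P = {0..<n}" "P \<inter> rho_map n s t ` P = {}"
      unfolding typeI_duadic_exists_def n_def by blast
    have muP: "x \<in> P \<Longrightarrow> (int q ^ j * x) mod n \<in> P" for x j
    proof (induction j)
      case 0
      then show ?case using P(1) by auto
    next
      case (Suc j)
      have "(int q ^ Suc j * x) mod n = mu_map n (int q) ((int q ^ j * x) mod n)"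
        by (simp add: mu_map_def mod_mult_right_eq mult.assoc)
      also have "\<dots> \<in> mu_map n (int q) ` P" using Suc by auto
      finally show ?case using P(2) by (simp add: mu_invariant_def)
    qed
    show "\<forall>j::nat. (2::int) ^ (\<tau> + 1) dvd (int q ^ j - s)"
    proof (rule ccontr)
      assume "\<not> ?thesis"
      then obtain j where nd: "\<not> (2::int) ^ (\<tau> + 1) dvd (int q ^ j - s)" by blast
      define D where "D = int q ^ j - s"
      have D0: "D \<noteq> 0" using nd D_def by auto
      define \<nu> where "\<nu> = multiplicity (2::int) D"
      obtain w where Dw: "D = 2 ^ \<nu> * w" "odd w" using odd_part[OF D0] \<nu>_def by metis
      have nuta: "\<nu> \<le> \<tau>"
      proof (rule ccontr)
        assume "\<not> \<nu> \<le> \<tau>"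
        then have "(2::int) ^ (\<tau> + 1) dvd 2 ^ \<nu>" by (intro le_imp_power_dvd) simp
        then show False using nd Dw D_def by (metis dvd_mult2)
      qed
      have cw: "coprime w n" using Dw(2) by (simp add: n_def)
      obtain w' where w': "[w * w' = 1] (mod n)" using cong_solve_coprime_int[OF cw] by blast
      define x where "x = w' * s * 2 ^ (\<tau> - \<nu>) * u"
      have "D * x = (w * w') * (s * t)"
        using Dw tu nuta by (simp add: x_def power_add[symmetric] algebra_simps)
      then have "[D * x = 1 * (s * t)] (mod n)"
        using w' by (metis cong_scalar_right)
      then have eq1: "[int q ^ j * x = s * (x + t)] (mod n)"
        unfolding D_def cong_iff_dvd_diff by (simp add: algebra_simps)
      define x0 where "x0 = x mod n"
      have x0r: "x0 \<in> {0..<n}" using npos by (simp add: x0_def)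
      have key: "rho_map n s t x0 = (int q ^ j * x0) mod n"
      proof -
        have "rho_map n s t x0 = (s * (x + t)) mod n"
          unfolding rho_map_def x0_def by (metis mod_add_left_eq mod_mult_right_eq)
        also have "\<dots> = (int q ^ j * x) mod n" using eq1 by (simp add: cong_def)
        also have "\<dots> = (int q ^ j * x0) mod n" by (simp add: x0_def mod_mult_right_eq)
        finally show ?thesis .
      qed
      show False
      proof (cases "x0 \<in> P")
        case True
        then have "rho_map n s t x0 \<in> P" using key muP by simp
        moreover have "rho_map n s t x0 \<in> rho_map n s t ` P" using True by blast
        ultimately show False using P(4) by blast
      next
        case False
        then obtain y where y: "y \<in> P" "x0 = rho_map n s t y" using x0r P(3) by blast
        have yr: "y \<in> {0..<n}" using y P(1) by blast
        define y' where "y' = (int q ^ j * y) mod n"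
        have y'P: "y' \<in> P" using muP y by (simp add: y'_def)
        have y'r: "y' \<in> {0..<n}" using y'P P(1) by blast
        have "rho_map n s t y' = (s * (int q ^ j * y + t)) mod n"
          unfolding rho_map_def y'_def by (metis mod_add_left_eq mod_mult_right_eq)
        also have "\<dots> = (int q ^ j * (s * (y + t))) mod n"
        proof -
          have "[s * (int q ^ j * y) + s * t = s * (int q ^ j * y) + s * (int q ^ j * t)] (mod n)"
            using qt[of j] by (intro cong_add cong_mult) (auto simp: cong_sym)
          then show ?thesis by (simp add: cong_def algebra_simps)
        qed
        also have "\<dots> = (int q ^ j * x0) mod n"
          by (simp add: y rho_map_def mod_mult_right_eq)
        also have "\<dots> = rho_map n s t x0" using key by simp
        finally have "rho_map n s t y' = rho_map n s t x0" .
        then have "y' = x0" using injrho y'r x0r unfolding rho_map_def inj_on_def by blast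
        then show False using False y'P by simp
      qed
    qed
  next
    assume H: "\<forall>j::nat. (2::int) ^ (\<tau> + 1) dvd (int q ^ j - s)"
    define M :: int where "M = 2 ^ (\<tau> + 1)"
    define h :: int where "h = 2 ^ \<tau>"
    have Mn: "M dvd n" unfolding M_def n_def using tauv by (intro le_imp_power_dvd) simp
    have s1: "[s = 1] (mod M)" using H[rule_format, of 0] unfolding M_def
      by (simp add: cong_iff_dvd_diff dvd_diff_commute)
    have q1: "[int q = 1] (mod M)"
    proof -
      have "[int q = s] (mod M)" using H[rule_format, of 1] unfolding M_def
        by (simp add: cong_iff_dvd_diff)
      then show ?thesis using s1 by (rule cong_trans)
    qed
    have th: "[t = h] (mod M)"
    proof -
      obtain k where "u = 2 * k + 1" using tu(2) by (metis oddE)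
      then have "t = M * k + h" using tu(1) by (simp add: M_def h_def algebra_simps)
      then show ?thesis by (simp add: cong_def)
    qed
    have hM: "M = 2 * h" "h > 0" by (simp_all add: M_def h_def)
    define B where "B x \<longleftrightarrow> x mod M < h" for x
    define P where "P = {x \<in> {0..<n}. B x}"
    have modM: "(a mod n) mod M = a mod M" for a using Mn by (simp add: mod_mod_cancel)
    have Bmu: "B (mu_map n (int q) x) \<longleftrightarrow> B x" for x
    proof -
      have "[int q * x = 1 * x] (mod M)" using q1 by (intro cong_mult) auto
      then show ?thesis by (simp add: B_def mu_map_def modM cong_def)
    qed
    have Brho: "B (rho_map n s t x) \<longleftrightarrow> \<not> B x" for x
    proof -
      have "[s * (x + t) = 1 * (x + h)] (mod M)" using s1 th by (intro cong_mult cong_add) auto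
      then have e: "(rho_map n s t x) mod M = (x + h) mod M"
        by (simp add: rho_map_def modM cong_def)
      have r: "0 \<le> x mod M" "x mod M < M" using hM by auto
      have "(x + h) mod M = (x mod M + h) mod M" by (simp add: mod_add_left_eq)
      moreover have "(x mod M + h) mod M = (if x mod M < h then x mod M + h else x mod M - h)"
      proof (cases "x mod M < h")
        case True then show ?thesis using r hM by (simp add: mod_pos_pos_trivial)
      next
        case False
        have "(x mod M + h) mod M = ((x mod M - h) + 1 * M) mod M" using hM by (simp add: algebra_simps)
        also have "\<dots> = (x mod M - h) mod M" by (simp only: mod_mult_self1)
        also have "\<dots> = x mod M - h" using False r hM(2) by (intro mod_pos_pos_trivial) (linarith, linarith)
        finally show ?thesis using False by simp
      qed
      moreover have r2: "x mod M < 2 * h" using r(2) hM(1) by simp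
      ultimately show ?thesis using e r hM(2) unfolding B_def by (auto split: if_splits)
    qed
    have rng: "rho_map n s t x \<in> {0..<n}" "mu_map n (int q) x \<in> {0..<n}" for x
      using npos by (auto simp: rho_map_def mu_map_def)
    have fin: "finite P" unfolding P_def by (rule finite_subset[of _ "{0..<n}"]) auto
    have muP: "mu_map n (int q) ` P = P"
    proof (rule endo_inj_surj[OF fin])
      show "mu_map n (int q) ` P \<subseteq> P" using rng Bmu by (auto simp: P_def)
      show "inj_on (mu_map n (int q)) P"
      proof -
        have "inj_on (mu_map n (int q)) {0..<n}" using injmu by (simp add: mu_map_def[abs_def])
        then show ?thesis by (rule inj_on_subset) (auto simp: P_def)
      qed
    qed
    have rhoall: "rho_map n s t ` {0..<n} = {0..<n}"
    proof (rule endo_inj_surj)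
      show "rho_map n s t ` {0..<n} \<subseteq> {0..<n}" using rng by auto
      show "inj_on (rho_map n s t) {0..<n}" using injrho by (simp add: rho_map_def[abs_def])
    qed simp
    have un: "P \<union> rho_map n s t ` P = {0..<n}"
    proof
      show "P \<union> rho_map n s t ` P \<subseteq> {0..<n}" using rng by (auto simp: P_def)
      show "{0..<n} \<subseteq> P \<union> rho_map n s t ` P"
      proof
        fix x assume x: "x \<in> {0..<n}"
        show "x \<in> P \<union> rho_map n s t ` P"
        proof (cases "B x")
          case True then show ?thesis using x by (simp add: P_def)
        next
          case False
          from x rhoall obtain y where y: "y \<in> {0..<n}" "x = rho_map n s t y" by blast
          then have "B y" using False Brho by auto
          then show ?thesis using y by (auto simp: P_def)
        qed
      qed
    qed
    have di: "P \<inter> rho_map n s t ` P = {}" using Brho by (auto simp: P_def)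
    show "typeI_duadic_exists (2 ^ v) (int q) s t"
      unfolding typeI_duadic_exists_def mu_invariant_def n_def[symmetric]
      using muP un di by (intro exI[of _ P]) (auto simp: P_def)
  qed
qed

end
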